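(* For every proper $S_0$-invariant subgroup $H$ of $E$, the set $\mathcal C_H=\{p\in P : \pi(w(p,\ell))\in H \text{ for some labelling } \ell \text{ of } p\}$ is a simplifiable hyperoctahedral category of partitions.
   Context: A partition $p\in P(k,l)$ ($k,l\ge 0$) is a partition of the disjoint union of $k$ ordered upper points $1,\dots,k$ and $l$ ordered lower points $1',\dots,l'$ into nonempty disjoint subsets called blocks; $P=\bigcup_{k,l}P(k,l)$. Operations on partitions: the tensor product $p\otimes q$ (horizontal juxtaposition, $q$ placed to the right of $p$); the composition of $p\in P(k,l)$ with $q\in P(l,m)$ (stack $p$ on top of $q$, identify the lower points of $p$ with the upper points of $q$, merge blocks connected through these middle points, then erase the middle points and any block lying entirely among them), giving a partition in $P(k,m)$; the involution $p^*$ (reflection of $p$ upside down); and rotation (moving the leftmost, resp. rightmost, point of one row to the leftmost, resp. rightmost, position of the other row, keeping the blocks). A category of partitions is a subset $\mathcal C\subseteq P$ containing the pair partition $\sqcap\in P(0,2)$ (one block consisting of two lower points) and the identity partition $|\in P(1,1)$ (one block $\{1,1'\}$), and closed under these four operations. Special partitions: the four block $b_4\in P(0,4)$ (one block of four lower points); the double singleton $\uparrow\otimes\uparrow\in P(0,2)$ (two one-point blocks); the pair positioner $\rho\in P(3,3)$ with blocks $\{1,2,2',3'\}$ and $\{3,1'\}$. A category of partitions $\mathcal C$ is hyperoctahedral if $b_4\in\mathcal C$ and $\uparrow\otimes\uparrow\notin\mathcal C$; it is simplifiable hyperoctahedral if moreover $\rho\in\mathcal C$. Let $L=\{a_1,a_2,\dots\}$,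 $\mathbb F_L$ the free group on $L$, $G=\mathbb Z_2^{*\infty}$ the free product of countably many copies of $\mathbb Z/2\mathbb Z$ generated by $a_1,a_2,\dots$ with $a_i^2=e$, and $\pi:\mathbb F_L\to G$ the canonical surjection. A labelling $\ell$ of a partition $p$ assigns pairwise distinct letters of $L$ to the blocks of $p$; $w(p,\ell)\in\mathbb F_L$ is the word obtained by reading the labels of the points of $p$ starting at the leftmost upper point, going through the upper row from left to right and then through the lower row from right to left. $E\le G$ is the subgroup of elements of even length. $S_0\subseteq\mathrm{End}(G)$ is the subsemigroup generated by: (1) for every $n\in\mathbb N$ and every choice of indices $i(1),\dots,i(n)$, the endomorphism with $a_k\mapsto a_{i(k)}$ for $1\le k\le n$ and $a_k\mapsto a_k$ for $k>n$; (2) for every $k$, the conjugation $w\mapsto a_kwa_k$. A subgroup $H$ is $S_0$-invariant if $\phi(H)\subseteq H$ for all $\phi\in S_0$. *)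

theory Defs
  imports "HOL-Library.Disjoint_Sets" "HOL-Algebra.Group"
begin

text \<open>Points of a partition: upper points Up 0 .. Up (k-1) (paper: 1..k) and
  lower points Lo 0 .. Lo (l-1) (paper: 1'..l'). A partition is a triple
  (k, l, B) where B is the set of blocks.\<close>

datatype pt = Up nat | Lo nat

type_synonym partition = "nat \<times> nat \<times> pt set set"

definition pts :: "nat \<Rightarrow> nat \<Rightarrow> pt set" where
  "pts k l = Up ` {..<k} \<union> Lo ` {..<l}"

definition Part :: "nat \<Rightarrow> nat \<Rightarrow> partition set" where
  "Part k l = {(k', l', B). k' = k \<and> l' = l \<and> partition_on (pts k l) B}"

definition AllPart :: "partition set" where
  "AllPart = (\<Union>k l. Part k l)"

fun shift_pt :: "nat \<Rightarrow> nat \<Rightarrow> pt \<Rightarrow> pt" where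
  "shift_pt k l (Up i) = Up (i + k)"
| "shift_pt k l (Lo j) = Lo (j + l)"

definition tensor :: "partition \<Rightarrow> partition \<Rightarrow> partition" where
  "tensor p q = (case p of (k1, l1, B1) \<Rightarrow> case q of (k2, l2, B2) \<Rightarrow>
     (k1 + k2, l1 + l2, B1 \<union> (\<lambda>b. shift_pt k1 l1 ` b) ` B2))"

fun swap_pt :: "pt \<Rightarrow> pt" where
  "swap_pt (Up i) = Lo i"
| "swap_pt (Lo j) = Up j"

definition involution :: "partition \<Rightarrow> partition" where
  "involution p = (case p of (k, l, B) \<Rightarrow> (l, k, (\<lambda>b. swap_pt ` b) ` B))"

definition same_block :: "pt set set \<Rightarrow> (pt \<times> pt) set" where
  "same_block B = {(x, y). \<exists>b\<in>B. x \<in> b \<and> y \<in> b}"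

text \<open>Composition: levels 0 (upper row of p), 1 (middle row), 2 (lower row of q).\<close>

fun top_emb :: "pt \<Rightarrow> nat \<times> nat" where
  "top_emb (Up i) = (0, i)"
| "top_emb (Lo j) = (1, j)"

fun bot_emb :: "pt \<Rightarrow> nat \<times> nat" where
  "bot_emb (Up i) = (1, i)"
| "bot_emb (Lo j) = (2, j)"

fun out_emb :: "pt \<Rightarrow> nat \<times> nat" where
  "out_emb (Up i) = (0, i)"
| "out_emb (Lo j) = (2, j)"

text \<open>p is placed on top of q; meaningful when the number of lower points of p
  equals the number of upper points of q.\<close>
definition pcomp :: "partition \<Rightarrow> partition \<Rightarrow> partition" where
  "pcomp p q = (case p of (k, l, B) \<Rightarrow> case q of (l', m, C) \<Rightarrow>
     (let R = map_prod top_emb top_emb ` same_block B \<union> map_prod bot_emb bot_emb ` same_block C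
      in (k, m, (\<lambda>x. {y \<in> pts k m. (out_emb x, out_emb y) \<in> R\<^sup>*}) ` pts k m)))"

fun rotUL_pt :: "pt \<Rightarrow> pt" where
  "rotUL_pt (Up i) = (if i = 0 then Lo 0 else Up (i - 1))"
| "rotUL_pt (Lo j) = Lo (Suc j)"

fun rotLU_pt :: "pt \<Rightarrow> pt" where
  "rotLU_pt (Lo j) = (if j = 0 then Up 0 else Lo (j - 1))"
| "rotLU_pt (Up i) = Up (Suc i)"

fun rotUR_pt :: "nat \<Rightarrow> nat \<Rightarrow> pt \<Rightarrow> pt" where
  "rotUR_pt k l (Up i) = (if i = k - 1 then Lo l else Up i)"
| "rotUR_pt k l (Lo j) = Lo j"

fun rotLR_pt :: "nat \<Rightarrow> nat \<Rightarrow> pt \<Rightarrow> pt" where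
  "rotLR_pt k l (Lo j) = (if j = l - 1 then Up k else Lo j)"
| "rotLR_pt k l (Up i) = Up i"

definition rotUL :: "partition \<Rightarrow> partition" where
  "rotUL p = (case p of (k, l, B) \<Rightarrow> (k - 1, l + 1, (\<lambda>b. rotUL_pt ` b) ` B))"

definition rotLU :: "partition \<Rightarrow> partition" where
  "rotLU p = (case p of (k, l, B) \<Rightarrow> (k + 1, l - 1, (\<lambda>b. rotLU_pt ` b) ` B))"

definition rotUR :: "partition \<Rightarrow> partition" where
  "rotUR p = (case p of (k, l, B) \<Rightarrow> (k - 1, l + 1, (\<lambda>b. rotUR_pt k l ` b) ` B))"

definition rotLR :: "partition \<Rightarrow> partition" where
  "rotLR p = (case p of (k, l, B) \<Rightarrow> (k + 1, l - 1, (\<lambda>b. rotLR_pt k l ` b) ` B))"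

definition pair_part :: partition where
  "pair_part = (0, 2, {{Lo 0, Lo 1}})"

definition id_part :: partition where
  "id_part = (1, 1, {{Up 0, Lo 0}})"

definition four_block :: partition where
  "four_block = (0, 4, {{Lo 0, Lo 1, Lo 2, Lo 3}})"

definition double_singleton :: partition where
  "double_singleton = (0, 2, {{Lo 0}, {Lo 1}})"

definition pair_positioner :: partition where
  "pair_positioner = (3, 3, {{Up 0, Up 1, Lo 1, Lo 2}, {Up 2, Lo 0}})"

definition category_of_partitions :: "partition set \<Rightarrow> bool" where
  "category_of_partitions C \<longleftrightarrow>
     C \<subseteq> AllPart \<and> pair_part \<in> C \<and> id_part \<in> C \<and>
     (\<forall>p\<in>C. \<forall>q\<in>C. tensor p q \<in> C) \<and>
     (\<forall>p\<in>C. \<forall>q\<in>C. fst (snd p) = fst q \<longrightarrow> pcomp p q \<in> C) \<and>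
     (\<forall>p\<in>C. involution p \<in> C) \<and>
     (\<forall>p\<in>C. fst p \<ge> 1 \<longrightarrow> rotUL p \<in> C \<and> rotUR p \<in> C) \<and>
     (\<forall>p\<in>C. fst (snd p) \<ge> 1 \<longrightarrow> rotLU p \<in> C \<and> rotLR p \<in> C)"

definition hyperoctahedral :: "partition set \<Rightarrow> bool" where
  "hyperoctahedral C \<longleftrightarrow> category_of_partitions C \<and> four_block \<in> C \<and> double_singleton \<notin> C"

definition simplifiable_hyperoctahedral :: "partition set \<Rightarrow> bool" where
  "simplifiable_hyperoctahedral C \<longleftrightarrow> hyperoctahedral C \<and> pair_positioner \<in> C"

text \<open>Letters a_1, a_2, ... are encoded by natural numbers (a_{i+1} is i).
  Elements of G are reduced words (no two adjacent equal letters).\<close>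

fun rcons :: "nat \<Rightarrow> nat list \<Rightarrow> nat list" where
  "rcons x [] = [x]"
| "rcons x (y # ys) = (if x = y then ys else x # y # ys)"

definition reduce :: "nat list \<Rightarrow> nat list" where
  "reduce ws = foldr rcons ws []"

definition reduced :: "nat list \<Rightarrow> bool" where
  "reduced ws \<longleftrightarrow> (\<forall>i. Suc i < length ws \<longrightarrow> ws ! i \<noteq> ws ! Suc i)"

definition Z2inf :: "nat list monoid" where
  "Z2inf = \<lparr>carrier = {ws. reduced ws}, mult = (\<lambda>x y. reduce (x @ y)), one = []\<rparr>"

text \<open>The canonical surjection from the free group, applied to a word (positive
  letters only, as all words w(p,l) are).\<close>
definition pi_word :: "nat list \<Rightarrow> nat list" where
  "pi_word w = reduce w"

definition Even_sub :: "nat list set" where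
  "Even_sub = {g \<in> carrier Z2inf. even (length g)}"

definition relabel_endo :: "nat \<Rightarrow> (nat \<Rightarrow> nat) \<Rightarrow> nat list \<Rightarrow> nat list" where
  "relabel_endo n f w = reduce (map (\<lambda>a. if a < n then f a else a) w)"

definition conj_endo :: "nat \<Rightarrow> nat list \<Rightarrow> nat list" where
  "conj_endo k w = reduce (k # w @ [k])"

inductive_set S0 :: "(nat list \<Rightarrow> nat list) set" where
  gen_relabel: "relabel_endo n f \<in> S0"
| gen_conj: "conj_endo k \<in> S0"
| comp: "\<phi> \<in> S0 \<Longrightarrow> \<psi> \<in> S0 \<Longrightarrow> \<phi> \<circ> \<psi> \<in> S0"

definition S0_invariant :: "nat list set \<Rightarrow> bool" where
  "S0_invariant H \<longleftrightarrow> (\<forall>\<phi>\<in>S0. \<phi> ` H \<subseteq> H)"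

definition block_of :: "pt set set \<Rightarrow> pt \<Rightarrow> pt set" where
  "block_of B x = (THE b. b \<in> B \<and> x \<in> b)"

definition is_labelling :: "partition \<Rightarrow> (pt set \<Rightarrow> nat) \<Rightarrow> bool" where
  "is_labelling p lab \<longleftrightarrow> inj_on lab (snd (snd p))"

definition word :: "partition \<Rightarrow> (pt set \<Rightarrow> nat) \<Rightarrow> nat list" where
  "word p lab = (case p of (k, l, B) \<Rightarrow>
     map (\<lambda>x. lab (block_of B x)) (map Up [0..<k] @ map Lo (rev [0..<l])))"

definition C_H :: "nat list set \<Rightarrow> partition set" where
  "C_H H = {p \<in> AllPart. \<exists>lab. is_labelling p lab \<and> pi_word (word p lab) \<in> H}"

end

theory Submission
  imports Defs "HOL-Library.Nat_Bijection"
begin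


lemma reduced_Cons: "reduced (x # r) \<longleftrightarrow> reduced r \<and> (r = [] \<or> hd r \<noteq> x)"
  unfolding reduced_def
  apply (cases r)
   apply simp
  apply (auto simp: nth_Cons split: nat.splits)
  done

lemma reduced_Nil[simp]: "reduced []" by (simp add: reduced_def)

lemma reduced_rcons: "reduced r \<Longrightarrow> reduced (rcons x r)"
  by (cases r) (auto simp: reduced_Cons)

lemma reduced_foldr: "reduced r \<Longrightarrow> reduced (foldr rcons xs r)"
  by (induction xs) (auto intro: reduced_rcons)

lemma reduced_reduce[simp]: "reduced (reduce w)"
  unfolding reduce_def by (rule reduced_foldr) simp

lemma reduce_Cons: "reduce (x # w) = rcons x (reduce w)"
  by (simp add: reduce_def)

lemma reduce_Nil[simp]: "reduce [] = []"
  by (simp add: reduce_def)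

lemma reduce_reduced: "reduced r \<Longrightarrow> reduce r = r"
proof (induction r)
  case (Cons x r)
  then show ?case by (cases r) (auto simp: reduce_Cons reduced_Cons)
qed simp

lemma reduce_append_foldr: "reduce (xs @ ys) = foldr rcons xs (reduce ys)"
  by (simp add: reduce_def)

lemma rcons_rcons: "reduced zs \<Longrightarrow> rcons x (rcons x zs) = zs"
  apply (cases zs)
   apply simp
  subgoal for a list by (cases list) (auto simp: reduced_Cons)
  done

lemma foldr_reduce: "reduced zs \<Longrightarrow> foldr rcons (reduce xs) zs = foldr rcons xs zs"
proof (induction xs)
  case Nil then show ?case by simp
next
  case (Cons x xs)
  show ?case
  proof (cases "\<exists>r'. reduce xs = x # r'")
    case True
    then obtain r' where r': "reduce xs = x # r'" by blast
    have "foldr rcons xs zs = rcons x (foldr rcons r' zs)"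
      using Cons r' by simp
    moreover have "reduced (foldr rcons r' zs)"
      by (rule reduced_foldr) (rule Cons.prems)
    ultimately show ?thesis using r' by (simp add: reduce_Cons rcons_rcons)
  next
    case False
    then have "rcons x (reduce xs) = x # reduce xs"
      by (cases "reduce xs") auto
    then show ?thesis using Cons by (simp add: reduce_Cons)
  qed
qed

lemma reduce_left: "reduce (reduce xs @ ys) = reduce (xs @ ys)"
  by (simp add: reduce_append_foldr foldr_reduce)

lemma reduce_right: "reduce (xs @ reduce ys) = reduce (xs @ ys)"
  by (simp add: reduce_append_foldr reduce_reduced)

lemma reduce_mid: "reduce (a @ reduce v @ b) = reduce (a @ v @ b)"
  by (metis append_assoc reduce_left reduce_right)

lemma reduce_idem[simp]: "reduce (reduce w) = reduce w"
  by (simp add: reduce_reduced)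

lemma reduce_xx: "reduce [x, x] = []"
  by (simp add: reduce_def)

lemma reduce_u_rev: "reduce (u @ rev u) = []"
proof (induction u)
  case (Cons x u)
  have "reduce ((x # u) @ rev (x # u)) = reduce ([x] @ (u @ rev u) @ [x])" by simp
  also have "\<dots> = reduce ([x] @ reduce (u @ rev u) @ [x])" by (simp only: reduce_mid)
  also have "\<dots> = []" using Cons by (simp add: reduce_def)
  finally show ?case .
qed simp

lemma reduce_cancel: "reduce (a @ u @ rev u @ b) = reduce (a @ b)"
proof -
  have "reduce (a @ (u @ rev u) @ b) = reduce (a @ reduce (u @ rev u) @ b)"
    by (simp only: reduce_mid)
  then show ?thesis by (simp add: reduce_u_rev)
qed

lemma reduce_map: "reduce (map h (reduce w)) = reduce (map h w)"
proof (induction w)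
  case (Cons x w)
  show ?case
  proof (cases "\<exists>r. reduce w = x # r")
    case True
    then obtain r where r: "reduce w = x # r" by blast
    have rr: "reduced r" using reduced_reduce[of w] r by (simp add: reduced_Cons)
    have "reduce (map h (reduce (x # w))) = reduce (map h r)"
      using r by (simp add: reduce_Cons)
    moreover have "reduce (map h (x # w)) = rcons (h x) (rcons (h x) (reduce (map h r)))"
      using Cons r by (simp add: reduce_Cons)
    ultimately show ?thesis by (simp add: rcons_rcons)
  next
    case False
    then have "rcons x (reduce w) = x # reduce w" by (cases "reduce w") auto
    then show ?thesis using Cons by (simp add: reduce_Cons)
  qed
qed simp

lemma Z2inf_group: "group Z2inf"
proof (rule groupI)
  fix x y z assume "x \<in> carrier Z2inf" "y \<in> carrier Z2inf" "z \<in> carrier Z2inf"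
  show "x \<otimes>\<^bsub>Z2inf\<^esub> y \<otimes>\<^bsub>Z2inf\<^esub> z = x \<otimes>\<^bsub>Z2inf\<^esub> (y \<otimes>\<^bsub>Z2inf\<^esub> z)"
    by (simp add: Z2inf_def reduce_left reduce_right)
next
  fix x assume x: "x \<in> carrier Z2inf"
  then show "\<one>\<^bsub>Z2inf\<^esub> \<otimes>\<^bsub>Z2inf\<^esub> x = x" by (simp add: Z2inf_def reduce_reduced)
  have "reduced (rev x)" using x unfolding Z2inf_def reduced_def
    apply (auto simp: rev_nth)
    by (metis Suc_diff_Suc diff_Suc_less length_greater_0_conv list.size(3) not_less_zero zero_less_diff)
  moreover have "reduce (rev x @ x) = []" using reduce_u_rev[of "rev x"] by simp
  ultimately show "\<exists>y\<in>carrier Z2inf. y \<otimes>\<^bsub>Z2inf\<^esub> x = \<one>\<^bsub>Z2inf\<^esub>"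
    by (auto simp: Z2inf_def)
qed (auto simp: Z2inf_def)



context
  fixes H
  assumes sg: "subgroup H Z2inf" and S0i: "S0_invariant H"
begin

lemma Hnil: "[] \<in> H"
  using subgroup.one_closed[OF sg] by (simp add: Z2inf_def)

lemma Hmult: "reduce a \<in> H \<Longrightarrow> reduce b \<in> H \<Longrightarrow> reduce (a @ b) \<in> H"
  using subgroup.m_closed[OF sg, of "reduce a" "reduce b"]
  by (simp add: Z2inf_def reduce_left reduce_right)

lemma Hrev: "reduce w \<in> H \<Longrightarrow> reduce (rev w) \<in> H"
proof -
  assume "reduce w \<in> H"
  then have "inv\<^bsub>Z2inf\<^esub> (reduce w) \<in> H" using subgroup.m_inv_closed[OF sg] by blast
  moreover have "inv\<^bsub>Z2inf\<^esub> (reduce w) = reduce (rev w)"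
  proof (rule group.inv_equality[OF Z2inf_group])
    show "reduce (rev w) \<otimes>\<^bsub>Z2inf\<^esub> reduce w = \<one>\<^bsub>Z2inf\<^esub>"
      using reduce_u_rev[of "rev w"] by (simp add: Z2inf_def reduce_left reduce_right)
  qed (auto simp: Z2inf_def)
  ultimately show ?thesis by simp
qed

lemma Hmap: "reduce w \<in> H \<Longrightarrow> reduce (map \<phi> w) \<in> H"
proof -
  assume w: "reduce w \<in> H"
  define n where "n = Suc (Max (set w))"
  have lt: "a \<in> set w \<Longrightarrow> a < n" for a unfolding n_def by (simp add: le_imp_less_Suc)
  have "relabel_endo n \<phi> \<in> S0" by (rule S0.gen_relabel)
  then have "relabel_endo n \<phi> (reduce w) \<in> H" using S0i w unfolding S0_invariant_def by blast
  moreover have "relabel_endo n \<phi> (reduce w) = reduce (map \<phi> w)"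
    unfolding relabel_endo_def reduce_map using lt by (metis (mono_tags, lifting) map_eq_conv)
  ultimately show ?thesis by simp
qed

lemma Hconj: "reduce w \<in> H \<Longrightarrow> reduce (u @ w @ rev u) \<in> H"
proof (induction u)
  case (Cons x u)
  then have "reduce (u @ w @ rev u) \<in> H" by simp
  moreover have "conj_endo x \<in> S0" by (rule S0.gen_conj)
  ultimately have "conj_endo x (reduce (u @ w @ rev u)) \<in> H" using S0i unfolding S0_invariant_def by blast
  moreover have "conj_endo x (reduce (u @ w @ rev u)) = reduce ((x # u) @ w @ rev (x # u))"
    unfolding conj_endo_def using reduce_mid[of "[x]" "u @ w @ rev u" "[x]"] by simp
  ultimately show ?case by simp
qed simp

lemma Hrot1: "reduce (x # v) \<in> H \<Longrightarrow> reduce (v @ [x]) \<in> H"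
proof -
  assume "reduce (x # v) \<in> H"
  then have "reduce ([x] @ (x # v) @ rev [x]) \<in> H" by (rule Hconj)
  moreover have "reduce ([x] @ (x # v) @ rev [x]) = reduce (v @ [x])"
    using reduce_cancel[of "[]" "[x]" "v @ [x]"] by simp
  ultimately show ?thesis by simp
qed

lemma Hrot2: "reduce (v @ [x]) \<in> H \<Longrightarrow> reduce (x # v) \<in> H"
proof -
  assume "reduce (v @ [x]) \<in> H"
  then have "reduce ([x] @ (v @ [x]) @ rev [x]) \<in> H" by (rule Hconj)
  moreover have "reduce ([x] @ (v @ [x]) @ rev [x]) = reduce (x # v)"
    using reduce_cancel[of "x # v" "[x]" "[]"] by simp
  ultimately show ?thesis by simp
qed

lemma Htensor: "reduce (U @ L) \<in> H \<Longrightarrow> reduce W \<in> H \<Longrightarrow> reduce (U @ W @ L) \<in> H"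
proof -
  assume a: "reduce (U @ L) \<in> H" "reduce W \<in> H"
  have "reduce ((U @ W @ rev U) @ (U @ L)) \<in> H" by (rule Hmult[OF Hconj[OF a(2)] a(1)])
  moreover have "reduce ((U @ W @ rev U) @ (U @ L)) = reduce (U @ W @ L)"
    using reduce_cancel[of "U @ W" "rev U" L] by simp
  ultimately show ?thesis by simp
qed

lemma Hcomp: "reduce (U @ M) \<in> H \<Longrightarrow> reduce (rev M @ L) \<in> H \<Longrightarrow> reduce (U @ L) \<in> H"
proof -
  assume a: "reduce (U @ M) \<in> H" "reduce (rev M @ L) \<in> H"
  have "reduce ((U @ M) @ (rev M @ L)) \<in> H" by (rule Hmult[OF a])
  then show ?thesis using reduce_cancel[of U M L] by simp
qed

end



definition plist :: "nat \<Rightarrow> nat \<Rightarrow> pt list" where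
  "plist k l = map Up [0..<k] @ map Lo (rev [0..<l])"

definition good :: "pt set set \<Rightarrow> pt set \<Rightarrow> (pt \<Rightarrow> nat) \<Rightarrow> bool" where
  "good B A g \<longleftrightarrow> (\<forall>x\<in>A. \<forall>y\<in>A. g x = g y \<longleftrightarrow> (\<exists>b\<in>B. x \<in> b \<and> y \<in> b))"

lemma set_plist: "set (plist k l) = pts k l"
  by (auto simp: plist_def pts_def)

lemma AllPart_iff: "(k, l, B) \<in> AllPart \<longleftrightarrow> partition_on (pts k l) B"
  by (auto simp: AllPart_def Part_def)

lemma word_plist: "word (k, l, B) lab = map (\<lambda>x. lab (block_of B x)) (plist k l)"
  by (simp add: word_def plist_def)

lemma block_unique: "partition_on A B \<Longrightarrow> b \<in> B \<Longrightarrow> x \<in> b \<Longrightarrow> block_of B x = b"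
  unfolding block_of_def
  apply (rule the_equality)
   apply simp
  by (meson disjointD disjoint_iff partition_onD2)

lemma block_of_in: "partition_on A B \<Longrightarrow> x \<in> A \<Longrightarrow> block_of B x \<in> B \<and> x \<in> block_of B x"
proof -
  assume P: "partition_on A B" and x: "x \<in> A"
  then obtain b where "b \<in> B" "x \<in> b" using partition_onD1[OF P] by blast
  then show ?thesis using block_unique[OF P] by simp
qed

lemma CH_iff:
  "(k, l, B) \<in> C_H H \<longleftrightarrow> partition_on (pts k l) B \<and>
     (\<exists>g. good B (pts k l) g \<and> reduce (map g (plist k l)) \<in> H)"
proof
  assume "(k, l, B) \<in> C_H H"
  then obtain lab where P: "partition_on (pts k l) B" and lab: "inj_on lab B"
    and w: "reduce (map (\<lambda>x. lab (block_of B x)) (plist k l)) \<in> H"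
    by (auto simp: C_H_def AllPart_iff is_labelling_def word_plist pi_word_def)
  have "good B (pts k l) (\<lambda>x. lab (block_of B x))"
    unfolding good_def
  proof (intro ballI)
    fix x y assume x: "x \<in> pts k l" and y: "y \<in> pts k l"
    show "lab (block_of B x) = lab (block_of B y) \<longleftrightarrow> (\<exists>b\<in>B. x \<in> b \<and> y \<in> b)"
      using block_of_in[OF P x] block_of_in[OF P y] block_unique[OF P] inj_onD[OF lab]
      by metis
  qed
  with P w show "partition_on (pts k l) B \<and>
     (\<exists>g. good B (pts k l) g \<and> reduce (map g (plist k l)) \<in> H)" by blast
next
  assume "partition_on (pts k l) B \<and>
     (\<exists>g. good B (pts k l) g \<and> reduce (map g (plist k l)) \<in> H)"
  then obtain g where P: "partition_on (pts k l) B" and g: "good B (pts k l) g"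
    and w: "reduce (map g (plist k l)) \<in> H" by blast
  define lab where "lab b = g (SOME x. x \<in> b)" for b
  have sub: "b \<in> B \<Longrightarrow> b \<subseteq> pts k l" for b using partition_onD1[OF P] by blast
  have ne: "b \<in> B \<Longrightarrow> (SOME x. x \<in> b) \<in> b" for b using partition_onD3[OF P]
    by (metis ex_in_conv someI_ex)
  have inj: "inj_on lab B"
  proof (rule inj_onI)
    fix b1 b2 assume b: "b1 \<in> B" "b2 \<in> B" "lab b1 = lab b2"
    then obtain c where "c \<in> B" "(SOME x. x \<in> b1) \<in> c" "(SOME x. x \<in> b2) \<in> c"
      using g ne sub unfolding good_def lab_def by (meson subsetD)
    then show "b1 = b2" using block_unique[OF P] b ne by metis
  qed
  have eq: "x \<in> pts k l \<Longrightarrow> lab (block_of B x) = g x" for x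
  proof -
    assume x: "x \<in> pts k l"
    let ?b = "block_of B x"
    have "?b \<in> B" "x \<in> ?b" using block_of_in[OF P x] by auto
    then show ?thesis using g ne sub x unfolding good_def lab_def by (meson subsetD)
  qed
  have m: "map (\<lambda>x. lab (block_of B x)) (plist k l) = map g (plist k l)"
    using eq set_plist by (metis (mono_tags, lifting) map_eq_conv)
  have "reduce (map (\<lambda>x. lab (block_of B x)) (plist k l)) \<in> H" using w by (simp only: m)
  then show "(k, l, B) \<in> C_H H" using P inj
    unfolding C_H_def is_labelling_def pi_word_def by (auto simp: AllPart_iff word_plist)
qed



lemma transform_part:
  assumes P: "partition_on (pts k l) B"
    and fA: "\<And>x. x \<in> pts k l \<Longrightarrow> f x \<in> pts k' l' \<and> h (f x) = x"
    and hA: "\<And>y. y \<in> pts k' l' \<Longrightarrow> h y \<in> pts k l \<and> f (h y) = y"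
  shows "partition_on (pts k' l') ((`) f ` B)"
proof -
  have inj: "inj_on f (pts k l)" by (metis fA inj_onI)
  have img: "f ` pts k l = pts k' l'" using fA hA by (metis image_eqI subsetI subset_antisym image_subset_iff)
  have "partition_on (f ` pts k l) ((`) f ` B - {{}})" by (rule partition_on_inj_image[OF P inj])
  moreover have "(`) f ` B - {{}} = (`) f ` B" using partition_onD3[OF P] by auto
  ultimately show ?thesis using img by simp
qed

lemma transform_good:
  assumes P: "partition_on (pts k l) B"
    and fA: "\<And>x. x \<in> pts k l \<Longrightarrow> f x \<in> pts k' l' \<and> h (f x) = x"
    and hA: "\<And>y. y \<in> pts k' l' \<Longrightarrow> h y \<in> pts k l \<and> f (h y) = y"
    and g: "good B (pts k l) g"
  shows "good ((`) f ` B) (pts k' l') (g \<circ> h)"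
  unfolding good_def
proof (intro ballI)
  fix x y assume x: "x \<in> pts k' l'" and y: "y \<in> pts k' l'"
  have sub: "b \<in> B \<Longrightarrow> b \<subseteq> pts k l" for b using partition_onD1[OF P] by blast
  have "(g \<circ> h) x = (g \<circ> h) y \<longleftrightarrow> (\<exists>b\<in>B. h x \<in> b \<and> h y \<in> b)"
    using g hA x y unfolding good_def by simp
  also have "\<dots> \<longleftrightarrow> (\<exists>b\<in>B. x \<in> f ` b \<and> y \<in> f ` b)"
  proof
    assume "\<exists>b\<in>B. h x \<in> b \<and> h y \<in> b"
    then show "\<exists>b\<in>B. x \<in> f ` b \<and> y \<in> f ` b" using hA x y by (metis image_eqI)
  next
    assume "\<exists>b\<in>B. x \<in> f ` b \<and> y \<in> f ` b"
    then obtain b where b: "b \<in> B" "x \<in> f ` b" "y \<in> f ` b" by blast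
    then obtain x0 y0 where "x0 \<in> b" "y0 \<in> b" "x = f x0" "y = f y0" by blast
    then have "h x \<in> b" "h y \<in> b" using fA sub[OF b(1)] by auto
    then show "\<exists>b\<in>B. h x \<in> b \<and> h y \<in> b" using b by blast
  qed
  finally show "(g \<circ> h) x = (g \<circ> h) y \<longleftrightarrow> (\<exists>b\<in>(`) f ` B. x \<in> b \<and> y \<in> b)" by blast
qed

lemma transform_CH:
  assumes C: "(k, l, B) \<in> C_H H"
    and fA: "\<And>x. x \<in> pts k l \<Longrightarrow> f x \<in> pts k' l' \<and> h (f x) = x"
    and hA: "\<And>y. y \<in> pts k' l' \<Longrightarrow> h y \<in> pts k l \<and> f (h y) = y"
    and pl: "plist k' l' = map f L" and sL: "set L \<subseteq> pts k l"
    and HH: "\<And>g. reduce (map g (plist k l)) \<in> H \<Longrightarrow> reduce (map g L) \<in> H"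
  shows "(k', l', (`) f ` B) \<in> C_H H"
proof -
  obtain g where P: "partition_on (pts k l) B" and g: "good B (pts k l) g"
    and w: "reduce (map g (plist k l)) \<in> H" using C unfolding CH_iff by blast
  have "map (g \<circ> h) (plist k' l') = map g L" unfolding pl using sL fA by auto
  then have "reduce (map (g \<circ> h) (plist k' l')) \<in> H" using HH[OF w] by simp
  then show ?thesis unfolding CH_iff
    using transform_part[OF P fA hA] transform_good[OF P fA hA g] by blast
qed



lemma Up_pts[simp]: "Up i \<in> pts k l \<longleftrightarrow> i < k" by (auto simp: pts_def)
lemma Lo_pts[simp]: "Lo j \<in> pts k l \<longleftrightarrow> j < l" by (auto simp: pts_def)

lemma rev_upt1: "rev [Suc 0..<Suc l] = map Suc (rev [0..<l])"
  by (metis map_Suc_upt rev_map)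
lemma butlast3: "butlast (A @ B @ [x]) = A @ B"
  by (metis append_assoc butlast_snoc)
lemma set_tl_sub: "set (tl xs) \<subseteq> set xs" by (cases xs) auto

lemma swap_swap[simp]: "swap_pt (swap_pt x) = x" by (cases x) auto

lemma plist_swap: "plist l k = map swap_pt (rev (plist k l))"
  by (simp add: plist_def rev_map)

lemma plist_rotUL: "plist k (Suc l) = map rotUL_pt (tl (plist (Suc k) l) @ [Up 0])"
proof -
  have "[0..<Suc k] = 0 # map Suc [0..<k]" by (simp add: upt_conv_Cons map_Suc_upt del: upt_Suc)
  moreover have "rev [0..<Suc l] = map Suc (rev [0..<l]) @ [0]"
    by (simp add: upt_conv_Cons rev_upt1 del: upt_Suc)
  ultimately show ?thesis by (simp add: plist_def del: upt_Suc)
qed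

lemma plist_rotLU: "plist (Suc k) l = map rotLU_pt (Lo 0 # butlast (plist k (Suc l)))"
proof -
  have "[0..<Suc k] = 0 # map Suc [0..<k]" by (simp add: upt_conv_Cons map_Suc_upt del: upt_Suc)
  moreover have "rev [0..<Suc l] = map Suc (rev [0..<l]) @ [0]"
    by (simp add: upt_conv_Cons rev_upt1 del: upt_Suc)
  ultimately show ?thesis by (simp add: plist_def butlast3 del: upt_Suc)
qed

lemma plist_Suc_last: "plist k (Suc l) = butlast (plist k (Suc l)) @ [Lo 0]"
  apply (simp add: plist_def upt_conv_Cons del: upt_Suc)
  by (rule butlast3[symmetric])

lemma plist_rotUR: "plist k (Suc l) = map (rotUR_pt (Suc k) l) (plist (Suc k) l)"
  by (simp add: plist_def)

lemma plist_rotLR: "plist (Suc k) l = map (rotLR_pt k (Suc l)) (plist k (Suc l))"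
  by (simp add: plist_def)

context
  fixes H
  assumes sg: "subgroup H Z2inf" and S0i: "S0_invariant H"
begin

lemma CH_involution: "p \<in> C_H H \<Longrightarrow> involution p \<in> C_H H"
proof -
  assume p: "p \<in> C_H H"
  obtain k l B where pe: "p = (k, l, B)" by (cases p) auto
  have "(l, k, (`) swap_pt ` B) \<in> C_H H"
  proof (rule transform_CH[where h = swap_pt and L = "rev (plist k l)"])
    show "(k, l, B) \<in> C_H H" using p pe by simp
    show "plist l k = map swap_pt (rev (plist k l))" by (rule plist_swap)
    show "set (rev (plist k l)) \<subseteq> pts k l" by (simp add: set_plist)
    show "reduce (map g (rev (plist k l))) \<in> H" if "reduce (map g (plist k l)) \<in> H" for g
      using Hrev[OF sg S0i that] by (simp add: rev_map)
  next
    fix x assume "x \<in> pts k l" then show "swap_pt x \<in> pts l k \<and> swap_pt (swap_pt x) = x"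
      by (cases x) auto
  next
    fix x assume "x \<in> pts l k" then show "swap_pt x \<in> pts k l \<and> swap_pt (swap_pt x) = x"
      by (cases x) auto
  qed
  then show ?thesis by (simp add: pe involution_def)
qed

lemma CH_rotUL: "p \<in> C_H H \<Longrightarrow> fst p \<ge> 1 \<Longrightarrow> rotUL p \<in> C_H H"
proof -
  assume p: "p \<in> C_H H" and k1: "fst p \<ge> 1"
  obtain k l B where pe: "p = (Suc k, l, B)"
  proof -
    obtain k0 l B where "p = (k0, l, B)" by (cases p) auto
    moreover obtain k where "k0 = Suc k" using k1 calculation by (cases k0) auto
    ultimately show ?thesis using that by blast
  qed
  have "(k, Suc l, (`) rotUL_pt ` B) \<in> C_H H"
  proof (rule transform_CH[where h = rotLU_pt and L = "tl (plist (Suc k) l) @ [Up 0]"])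
    show "(Suc k, l, B) \<in> C_H H" using p pe by simp
    show "plist k (Suc l) = map rotUL_pt (tl (plist (Suc k) l) @ [Up 0])" by (rule plist_rotUL)
    show "set (tl (plist (Suc k) l) @ [Up 0]) \<subseteq> pts (Suc k) l"
      using set_plist[of "Suc k" l] set_tl_sub[of "plist (Suc k) l"] by auto
    show "reduce (map g (tl (plist (Suc k) l) @ [Up 0])) \<in> H" if "reduce (map g (plist (Suc k) l)) \<in> H" for g
      using Hrot1[OF sg S0i, of "g (Up 0)" "map g (tl (plist (Suc k) l))"] that
      by (simp add: plist_def upt_conv_Cons del: upt_Suc)
  next
    fix x assume "x \<in> pts (Suc k) l" then show "rotUL_pt x \<in> pts k (Suc l) \<and> rotLU_pt (rotUL_pt x) = x"
      by (cases x) auto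
  next
    fix y assume "y \<in> pts k (Suc l)" then show "rotLU_pt y \<in> pts (Suc k) l \<and> rotUL_pt (rotLU_pt y) = y"
      by (cases y) auto
  qed
  then show ?thesis by (simp add: pe rotUL_def)
qed

lemma CH_rotLU: "p \<in> C_H H \<Longrightarrow> fst (snd p) \<ge> 1 \<Longrightarrow> rotLU p \<in> C_H H"
proof -
  assume p: "p \<in> C_H H" and k1: "fst (snd p) \<ge> 1"
  obtain k l B where pe: "p = (k, Suc l, B)"
  proof -
    obtain k l0 B where "p = (k, l0, B)" by (cases p) auto
    moreover obtain l where "l0 = Suc l" using k1 calculation by (cases l0) auto
    ultimately show ?thesis using that by blast
  qed
  have "(Suc k, l, (`) rotLU_pt ` B) \<in> C_H H"
  proof (rule transform_CH[where h = rotUL_pt and L = "Lo 0 # butlast (plist k (Suc l))"])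
    show "(k, Suc l, B) \<in> C_H H" using p pe by simp
    show "plist (Suc k) l = map rotLU_pt (Lo 0 # butlast (plist k (Suc l)))" by (rule plist_rotLU)
    show "set (Lo 0 # butlast (plist k (Suc l))) \<subseteq> pts k (Suc l)"
      using set_plist[of k "Suc l"] by (auto dest: in_set_butlastD)
    show "reduce (map g (Lo 0 # butlast (plist k (Suc l)))) \<in> H" if "reduce (map g (plist k (Suc l))) \<in> H" for g
    proof -
      have "reduce (map g (butlast (plist k (Suc l))) @ [g (Lo 0)]) \<in> H"
        using that plist_Suc_last[of k l] by (metis list.simps(8,9) map_append)
      then show ?thesis using Hrot2[OF sg S0i] by simp
    qed
  next
    fix x assume "x \<in> pts k (Suc l)" then show "rotLU_pt x \<in> pts (Suc k) l \<and> rotUL_pt (rotLU_pt x) = x"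
      by (cases x) auto
  next
    fix y assume "y \<in> pts (Suc k) l" then show "rotUL_pt y \<in> pts k (Suc l) \<and> rotLU_pt (rotUL_pt y) = y"
      by (cases y) auto
  qed
  then show ?thesis by (simp add: pe rotLU_def)
qed

lemma CH_rotUR: "p \<in> C_H H \<Longrightarrow> fst p \<ge> 1 \<Longrightarrow> rotUR p \<in> C_H H"
proof -
  assume p: "p \<in> C_H H" and k1: "fst p \<ge> 1"
  obtain k l B where pe: "p = (Suc k, l, B)"
  proof -
    obtain k0 l B where "p = (k0, l, B)" by (cases p) auto
    moreover obtain k where "k0 = Suc k" using k1 calculation by (cases k0) auto
    ultimately show ?thesis using that by blast
  qed
  have "(k, Suc l, (`) (rotUR_pt (Suc k) l) ` B) \<in> C_H H"
  proof (rule transform_CH[where h = "rotLR_pt k (Suc l)" and L = "plist (Suc k) l"])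
    show "(Suc k, l, B) \<in> C_H H" using p pe by simp
  next
    fix x assume "x \<in> pts (Suc k) l" then show "rotUR_pt (Suc k) l x \<in> pts k (Suc l) \<and> rotLR_pt k (Suc l) (rotUR_pt (Suc k) l x) = x"
      by (cases x) auto
  next
    fix y assume "y \<in> pts k (Suc l)" then show "rotLR_pt k (Suc l) y \<in> pts (Suc k) l \<and> rotUR_pt (Suc k) l (rotLR_pt k (Suc l) y) = y"
      by (cases y) auto
  qed (auto simp: plist_rotUR set_plist)
  then show ?thesis by (simp add: pe rotUR_def)
qed

lemma CH_rotLR: "p \<in> C_H H \<Longrightarrow> fst (snd p) \<ge> 1 \<Longrightarrow> rotLR p \<in> C_H H"
proof -
  assume p: "p \<in> C_H H" and k1: "fst (snd p) \<ge> 1"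
  obtain k l B where pe: "p = (k, Suc l, B)"
  proof -
    obtain k l0 B where "p = (k, l0, B)" by (cases p) auto
    moreover obtain l where "l0 = Suc l" using k1 calculation by (cases l0) auto
    ultimately show ?thesis using that by blast
  qed
  have "(Suc k, l, (`) (rotLR_pt k (Suc l)) ` B) \<in> C_H H"
  proof (rule transform_CH[where h = "rotUR_pt (Suc k) l" and L = "plist k (Suc l)"])
    show "(k, Suc l, B) \<in> C_H H" using p pe by simp
  next
    fix x assume "x \<in> pts k (Suc l)" then show "rotLR_pt k (Suc l) x \<in> pts (Suc k) l \<and> rotUR_pt (Suc k) l (rotLR_pt k (Suc l) x) = x"
      by (cases x) auto
  next
    fix y assume "y \<in> pts (Suc k) l" then show "rotUR_pt (Suc k) l y \<in> pts k (Suc l) \<and> rotLR_pt k (Suc l) (rotUR_pt (Suc k) l y) = y"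
      by (cases y) auto
  qed (auto simp: plist_rotLR set_plist)
  then show ?thesis by (simp add: pe rotLR_def)
qed

end



lemma upt_split: "[0..<a + b] = [0..<a] @ map (\<lambda>i. i + a) [0..<b]"
  by (simp add: upt_add_eq_append[of 0 a b] map_add_upt add.commute)

lemma plist_tensor: "plist (k1 + k2) (l1 + l2) =
   map Up [0..<k1] @ map (shift_pt k1 l1) (plist k2 l2) @ map Lo (rev [0..<l1])"
  by (simp add: plist_def upt_split rev_map del: upt_Suc)

fun unshift :: "nat \<Rightarrow> nat \<Rightarrow> pt \<Rightarrow> pt" where
  "unshift k l (Up i) = Up (i - k)"
| "unshift k l (Lo j) = Lo (j - l)"

lemma unshift_shift[simp]: "unshift k l (shift_pt k l z) = z" by (cases z) auto

lemma shift_pts: "z \<in> pts k2 l2 \<Longrightarrow> shift_pt k1 l1 z \<in> pts (k1 + k2) (l1 + l2) - pts k1 l1"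
  by (cases z) auto

lemma unshift_pts: "x \<in> pts (k1 + k2) (l1 + l2) - pts k1 l1 \<Longrightarrow>
   unshift k1 l1 x \<in> pts k2 l2 \<and> shift_pt k1 l1 (unshift k1 l1 x) = x"
  by (cases x) auto

lemma tensor_partition:
  assumes P1: "partition_on (pts k1 l1) B1" and P2: "partition_on (pts k2 l2) B2"
  shows "partition_on (pts (k1 + k2) (l1 + l2)) (B1 \<union> (\<lambda>b. shift_pt k1 l1 ` b) ` B2)"
proof -
  let ?s = "shift_pt k1 l1"
  have inj: "inj_on ?s (pts k2 l2)" by (metis inj_onI unshift_shift)
  have P2': "partition_on (?s ` pts k2 l2) ((`) ?s ` B2)"
  proof -
    have "(`) ?s ` B2 - {{}} = (`) ?s ` B2" using partition_onD3[OF P2] by auto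
    then show ?thesis using partition_on_inj_image[OF P2 inj] by simp
  qed
  have img: "?s ` pts k2 l2 = pts (k1 + k2) (l1 + l2) - pts k1 l1"
  proof (rule subset_antisym)
    show "?s ` pts k2 l2 \<subseteq> pts (k1 + k2) (l1 + l2) - pts k1 l1"
      using shift_pts by blast
    show "pts (k1 + k2) (l1 + l2) - pts k1 l1 \<subseteq> ?s ` pts k2 l2"
    proof
      fix x assume "x \<in> pts (k1 + k2) (l1 + l2) - pts k1 l1"
      then have "unshift k1 l1 x \<in> pts k2 l2" "?s (unshift k1 l1 x) = x" using unshift_pts by auto
      then show "x \<in> ?s ` pts k2 l2" by (metis image_eqI)
    qed
  qed
  have A1: "pts k1 l1 \<subseteq> pts (k1 + k2) (l1 + l2)" by (auto simp: pts_def)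
  show ?thesis
  proof (rule partition_onI)
    show "\<Union>(B1 \<union> (\<lambda>b. ?s ` b) ` B2) = pts (k1 + k2) (l1 + l2)"
    proof -
      have U2: "\<Union>((`) ?s ` B2) = pts (k1 + k2) (l1 + l2) - pts k1 l1"
        using partition_onD1[OF P2'] img by simp
      have U1: "\<Union>B1 = pts k1 l1" using partition_onD1[OF P1] by simp
      have "\<Union>(B1 \<union> (\<lambda>b. ?s ` b) ` B2) = \<Union>B1 \<union> \<Union>((`) ?s ` B2)" by (rule Union_Un_distrib)
      also have "\<dots> = pts (k1 + k2) (l1 + l2)" unfolding U1 U2 using A1 by blast
      finally show ?thesis .
    qed
    show "{} \<notin> B1 \<union> (\<lambda>b. ?s ` b) ` B2" using partition_onD3[OF P1] partition_onD3[OF P2'] by auto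
    fix p q assume p: "p \<in> B1 \<union> (\<lambda>b. ?s ` b) ` B2" and q: "q \<in> B1 \<union> (\<lambda>b. ?s ` b) ` B2" and pq: "p \<noteq> q"
    have s1: "b \<in> B1 \<Longrightarrow> b \<subseteq> pts k1 l1" for b using partition_onD1[OF P1] by blast
    have s2: "b \<in> (`) ?s ` B2 \<Longrightarrow> b \<subseteq> pts (k1 + k2) (l1 + l2) - pts k1 l1" for b
      using partition_onD1[OF P2'] img by blast
    show "disjnt p q"
    proof (cases "p \<in> B1")
      case True
      show ?thesis
      proof (cases "q \<in> B1")
        case True then show ?thesis using \<open>p \<in> B1\<close> pq partition_onD2[OF P1] by (metis pairwiseD)
      next
        case False
        then have qB: "q \<in> (`) ?s ` B2" using q by blast
        have "p \<subseteq> pts k1 l1" using s1 \<open>p \<in> B1\<close> by blast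
        moreover have "q \<subseteq> pts (k1 + k2) (l1 + l2) - pts k1 l1" using s2 qB by blast
        ultimately show ?thesis unfolding disjnt_def by blast
      qed
    next
      case False
      then have pB: "p \<in> (`) ?s ` B2" using p by auto
      show ?thesis
      proof (cases "q \<in> B1")
        case True
        have "q \<subseteq> pts k1 l1" using s1 True by blast
        moreover have "p \<subseteq> pts (k1 + k2) (l1 + l2) - pts k1 l1" using s2 pB by blast
        ultimately show ?thesis unfolding disjnt_def by blast
      next
        case False then show ?thesis using pB q pq partition_onD2[OF P2'] by (metis pairwiseD UnE)
      qed
    qed
  qed
qed

context
  fixes H
  assumes sg: "subgroup H Z2inf" and S0i: "S0_invariant H"
begin

lemma CH_tensor: "p \<in> C_H H \<Longrightarrow> q \<in> C_H H \<Longrightarrow> tensor p q \<in> C_H H"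
proof -
  assume p: "p \<in> C_H H" and q: "q \<in> C_H H"
  obtain k1 l1 B1 where pe: "p = (k1, l1, B1)" by (cases p) auto
  obtain k2 l2 B2 where qe: "q = (k2, l2, B2)" by (cases q) auto
  obtain g1 where P1: "partition_on (pts k1 l1) B1" and g1: "good B1 (pts k1 l1) g1"
    and w1: "reduce (map g1 (plist k1 l1)) \<in> H" using p unfolding pe CH_iff by blast
  obtain g2 where P2: "partition_on (pts k2 l2) B2" and g2: "good B2 (pts k2 l2) g2"
    and w2: "reduce (map g2 (plist k2 l2)) \<in> H" using q unfolding qe CH_iff by blast
  let ?s = "shift_pt k1 l1" and ?A = "pts (k1 + k2) (l1 + l2)" and ?A1 = "pts k1 l1"
  let ?B = "B1 \<union> (\<lambda>b. ?s ` b) ` B2"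
  have finA1: "finite ?A1" by (simp add: pts_def)
  define N where "N = Suc (Max (g1 ` ?A1))"
  have ltN: "x \<in> ?A1 \<Longrightarrow> g1 x < N" for x unfolding N_def using finA1 by (simp add: le_imp_less_Suc)
  define g where "g x = (if x \<in> ?A1 then g1 x else g2 (unshift k1 l1 x) + N)" for x
  have P: "partition_on ?A ?B" by (rule tensor_partition[OF P1 P2])
  have s1: "b \<in> B1 \<Longrightarrow> b \<subseteq> ?A1" for b using partition_onD1[OF P1] by blast
  have s2: "b \<in> B2 \<Longrightarrow> b \<subseteq> pts k2 l2" for b using partition_onD1[OF P2] by blast
  have noA1: "b \<in> B2 \<Longrightarrow> z \<in> ?s ` b \<Longrightarrow> z \<notin> ?A1" for b z
  proof -
    assume "b \<in> B2" "z \<in> ?s ` b"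
    then obtain z0 where "z0 \<in> pts k2 l2" "z = ?s z0" using s2 by blast
    then show "z \<notin> ?A1" using shift_pts[of z0 k2 l2 k1 l1] by simp
  qed
  have good: "good ?B ?A g"
    unfolding good_def
  proof (intro ballI)
    fix x y assume x: "x \<in> ?A" and y: "y \<in> ?A"
    show "g x = g y \<longleftrightarrow> (\<exists>b\<in>?B. x \<in> b \<and> y \<in> b)"
    proof (cases "x \<in> ?A1")
      case xin: True
      show ?thesis
      proof (cases "y \<in> ?A1")
        case True
        have "(\<exists>b\<in>?B. x \<in> b \<and> y \<in> b) \<longleftrightarrow> (\<exists>b\<in>B1. x \<in> b \<and> y \<in> b)"
          using xin noA1 by blast
        then show ?thesis using g1 xin True unfolding good_def g_def by simp
      next
        case False
        have "\<not> (\<exists>b\<in>?B. x \<in> b \<and> y \<in> b)"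
          using xin False s1 noA1 by blast
        moreover have "g x \<noteq> g y" using xin False ltN unfolding g_def by (metis add.commute not_add_less2)
        ultimately show ?thesis by simp
      qed
    next
      case xout: False
      show ?thesis
      proof (cases "y \<in> ?A1")
        case True
        have "\<not> (\<exists>b\<in>?B. x \<in> b \<and> y \<in> b)"
          using xout True s1 noA1 by blast
        moreover have "g x \<noteq> g y" using xout True ltN unfolding g_def by (metis add.commute not_add_less2)
        ultimately show ?thesis by simp
      next
        case False
        have ux: "unshift k1 l1 x \<in> pts k2 l2" "?s (unshift k1 l1 x) = x" using unshift_pts x xout by auto
        have uy: "unshift k1 l1 y \<in> pts k2 l2" "?s (unshift k1 l1 y) = y" using unshift_pts y False by auto
        have "(\<exists>b\<in>?B. x \<in> b \<and> y \<in> b) \<longleftrightarrow> (\<exists>b\<in>B2. x \<in> ?s ` b \<and> y \<in> ?s ` b)"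
          using xout s1 by blast
        also have "\<dots> \<longleftrightarrow> (\<exists>b\<in>B2. unshift k1 l1 x \<in> b \<and> unshift k1 l1 y \<in> b)"
          using ux uy by (metis image_eqI imageE unshift_shift)
        also have "\<dots> \<longleftrightarrow> g2 (unshift k1 l1 x) = g2 (unshift k1 l1 y)"
          using g2 ux uy unfolding good_def by simp
        finally show ?thesis using xout False unfolding g_def by simp
      qed
    qed
  qed
  let ?U = "map g1 (map Up [0..<k1])" and ?L = "map g1 (map Lo (rev [0..<l1]))"
  let ?W = "map (\<lambda>a. a + N) (map g2 (plist k2 l2))"
  have e1: "map g (map Up [0..<k1]) = ?U" by (auto simp: g_def)
  have e2: "map g (map Lo (rev [0..<l1])) = ?L" by (auto simp: g_def)
  have e3: "map g (map ?s (plist k2 l2)) = ?W"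
  proof -
    have "z \<in> pts k2 l2 \<Longrightarrow> g (?s z) = g2 z + N" for z
      using shift_pts[of z k2 l2 k1 l1] by (auto simp: g_def)
    then show ?thesis using set_plist by auto
  qed
  have "map g (plist (k1 + k2) (l1 + l2)) = ?U @ ?W @ ?L"
    unfolding plist_tensor map_append e1 e2 e3 by simp
  moreover have "reduce (?U @ ?L) \<in> H" using w1 by (simp add: plist_def)
  moreover have "reduce ?W \<in> H" by (rule Hmap[OF sg S0i w2])
  ultimately have "reduce (map g (plist (k1 + k2) (l1 + l2))) \<in> H"
    using Htensor[OF sg S0i] by simp
  then have "(k1 + k2, l1 + l2, ?B) \<in> C_H H" unfolding CH_iff using P good by blast
  then show ?thesis by (simp add: pe qe tensor_def)
qed

end



definition crep :: "((nat \<times> nat) \<times> (nat \<times> nat)) set \<Rightarrow> nat \<times> nat \<Rightarrow> nat" where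
  "crep R v = Min (prod_encode ` {w. (v, w) \<in> R\<^sup>*})"

lemma class_finite:
  assumes RV: "R \<subseteq> V \<times> V" and fV: "finite V"
  shows "finite {w. (v, w) \<in> R\<^sup>*}"
proof -
  have "{w. (v, w) \<in> R\<^sup>*} \<subseteq> insert v V"
  proof
    fix w assume "w \<in> {w. (v, w) \<in> R\<^sup>*}"
    then have "(v, w) \<in> R\<^sup>*" by simp
    then show "w \<in> insert v V"
      by (induction rule: rtrancl_induct) (use RV in auto)
  qed
  then show ?thesis using fV finite_subset by blast
qed

lemma crep_eq:
  assumes RV: "R \<subseteq> V \<times> V" and fV: "finite V" and sR: "sym R"
  shows "crep R v = crep R w \<longleftrightarrow> (v, w) \<in> R\<^sup>*"
proof
  have sS: "sym (R\<^sup>*)" by (rule sym_rtrancl[OF sR])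
  assume eq: "crep R v = crep R w"
  have fin: "finite (prod_encode ` {u. (x, u) \<in> R\<^sup>*})" for x using class_finite[OF RV fV] by simp
  have ne: "prod_encode ` {u. (x, u) \<in> R\<^sup>*} \<noteq> {}" for x
  proof -
    have "x \<in> {u. (x, u) \<in> R\<^sup>*}" by simp
    then show ?thesis by blast
  qed
  have "crep R v \<in> prod_encode ` {u. (v, u) \<in> R\<^sup>*}"
    unfolding crep_def by (rule Min_in[OF fin ne])
  then obtain e where e: "(v, e) \<in> R\<^sup>*" "crep R v = prod_encode e" by blast
  have "crep R w \<in> prod_encode ` {u. (w, u) \<in> R\<^sup>*}"
    unfolding crep_def by (rule Min_in[OF fin ne])
  then obtain e' where e': "(w, e') \<in> R\<^sup>*" "crep R w = prod_encode e'" by blast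
  have "e = e'" using e e' eq by simp
  then have "(e, w) \<in> R\<^sup>*" using e' sS by (auto dest: symD)
  then show "(v, w) \<in> R\<^sup>*" using e rtrancl_trans by metis
next
  have sS: "sym (R\<^sup>*)" by (rule sym_rtrancl[OF sR])
  assume "(v, w) \<in> R\<^sup>*"
  then have "{u. (v, u) \<in> R\<^sup>*} = {u. (w, u) \<in> R\<^sup>*}"
    using sS by (auto dest: symD intro: rtrancl_trans)
  then show "crep R v = crep R w" unfolding crep_def by simp
qed

lemma sym_same_block: "sym (same_block B)"
  by (auto simp: same_block_def sym_def)

lemma sym_map_prod: "sym r \<Longrightarrow> sym (map_prod f f ` r)"
  by (auto simp: sym_def)

lemma same_block_sub: "partition_on A B \<Longrightarrow> same_block B \<subseteq> A \<times> A"
  by (auto simp: same_block_def dest: partition_onD1)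

context
  fixes H
  assumes sg: "subgroup H Z2inf" and S0i: "S0_invariant H"
begin

lemma CH_pcomp: "p \<in> C_H H \<Longrightarrow> q \<in> C_H H \<Longrightarrow> fst (snd p) = fst q \<Longrightarrow> pcomp p q \<in> C_H H"
proof -
  assume p: "p \<in> C_H H" and q: "q \<in> C_H H" and pq: "fst (snd p) = fst q"
  obtain k l B where pe: "p = (k, l, B)" by (cases p) auto
  obtain m C where qe: "q = (l, m, C)" using pq pe by (cases q) auto
  obtain g1 where P1: "partition_on (pts k l) B" and g1: "good B (pts k l) g1"
    and w1: "reduce (map g1 (plist k l)) \<in> H" using p unfolding pe CH_iff by blast
  obtain g2 where P2: "partition_on (pts l m) C" and g2: "good C (pts l m) g2"
    and w2: "reduce (map g2 (plist l m)) \<in> H" using q unfolding qe CH_iff by blast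
  define R where "R = map_prod top_emb top_emb ` same_block B \<union> map_prod bot_emb bot_emb ` same_block C"
  define V where "V = top_emb ` pts k l \<union> bot_emb ` pts l m"
  have fV: "finite V" unfolding V_def pts_def by simp
  have RV: "R \<subseteq> V \<times> V" unfolding R_def V_def
    using same_block_sub[OF P1] same_block_sub[OF P2] by auto
  have sR: "sym R" unfolding R_def
    by (intro sym_Un sym_map_prod sym_same_block)
  have sS: "sym (R\<^sup>*)" by (rule sym_rtrancl[OF sR])
  define rep where "rep = crep R"
  have rep_eq: "rep v = rep w \<longleftrightarrow> (v, w) \<in> R\<^sup>*" for v w
    unfolding rep_def by (rule crep_eq[OF RV fV sR])
  define Q where "Q = (\<lambda>x. {y \<in> pts k m. (out_emb x, out_emb y) \<in> R\<^sup>*}) ` pts k m"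
  have pc: "pcomp p q = (k, m, Q)" unfolding pe qe pcomp_def Q_def R_def by (simp add: Let_def)
  define r where "r = {(x, y). x \<in> pts k m \<and> y \<in> pts k m \<and> (out_emb x, out_emb y) \<in> R\<^sup>*}"
  have eqv: "equiv (pts k m) r"
    unfolding r_def
  proof (rule equivI)
    show "refl_on (pts k m) {(x, y). x \<in> pts k m \<and> y \<in> pts k m \<and> (out_emb x, out_emb y) \<in> R\<^sup>*}"
      by (auto simp: refl_on_def)
    show "sym {(x, y). x \<in> pts k m \<and> y \<in> pts k m \<and> (out_emb x, out_emb y) \<in> R\<^sup>*}"
      by (auto simp: sym_def intro: symD[OF sS])
    show "trans {(x, y). x \<in> pts k m \<and> y \<in> pts k m \<and> (out_emb x, out_emb y) \<in> R\<^sup>*}"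
      by (auto simp: trans_def intro: rtrancl_trans)
  qed auto
  have Qq: "Q = pts k m // r"
    unfolding Q_def quotient_def r_def by auto
  have PQ: "partition_on (pts k m) Q" unfolding Qq by (rule partition_on_quotient[OF eqv])
  define g where "g x = rep (out_emb x)" for x
  have good: "good Q (pts k m) g"
    unfolding good_def
  proof (intro ballI)
    fix x y assume x: "x \<in> pts k m" and y: "y \<in> pts k m"
    show "g x = g y \<longleftrightarrow> (\<exists>b\<in>Q. x \<in> b \<and> y \<in> b)"
    proof
      assume "g x = g y"
      then have xy: "(out_emb x, out_emb y) \<in> R\<^sup>*" unfolding g_def rep_eq .
      define bx where "bx = {y' \<in> pts k m. (out_emb x, out_emb y') \<in> R\<^sup>*}"
      have a: "x \<in> bx" and b: "y \<in> bx" unfolding bx_def using x y xy by auto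
      have c: "bx \<in> Q" unfolding Q_def bx_def using x by (rule imageI)
      show "\<exists>b\<in>Q. x \<in> b \<and> y \<in> b" using a b c by blast
    next
      assume "\<exists>b\<in>Q. x \<in> b \<and> y \<in> b"
      then obtain z where "(out_emb z, out_emb x) \<in> R\<^sup>*" "(out_emb z, out_emb y) \<in> R\<^sup>*"
        unfolding Q_def by blast
      then have "(out_emb x, out_emb y) \<in> R\<^sup>*" using sS by (meson rtrancl_trans symD)
      then show "g x = g y" unfolding g_def rep_eq .
    qed
  qed
  define \<phi>1 where "\<phi>1 a = rep (top_emb (SOME x. x \<in> pts k l \<and> g1 x = a))" for a
  define \<phi>2 where "\<phi>2 a = rep (bot_emb (SOME x. x \<in> pts l m \<and> g2 x = a))" for a
  have f1: "\<phi>1 (g1 x) = rep (top_emb x)" if x: "x \<in> pts k l" for x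
  proof -
    let ?x = "SOME x'. x' \<in> pts k l \<and> g1 x' = g1 x"
    have "?x \<in> pts k l \<and> g1 ?x = g1 x" by (rule someI[of _ x]) (use x in simp)
    then obtain b where "b \<in> B" "?x \<in> b" "x \<in> b" using g1 x unfolding good_def by blast
    then have "(?x, x) \<in> same_block B" unfolding same_block_def by blast
    then have "(top_emb ?x, top_emb x) \<in> R" unfolding R_def by force
    then show ?thesis unfolding \<phi>1_def rep_eq by blast
  qed
  have f2: "\<phi>2 (g2 x) = rep (bot_emb x)" if x: "x \<in> pts l m" for x
  proof -
    let ?x = "SOME x'. x' \<in> pts l m \<and> g2 x' = g2 x"
    have "?x \<in> pts l m \<and> g2 ?x = g2 x" by (rule someI[of _ x]) (use x in simp)
    then obtain b where "b \<in> C" "?x \<in> b" "x \<in> b" using g2 x unfolding good_def by blast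
    then have "(?x, x) \<in> same_block C" unfolding same_block_def by blast
    then have "(bot_emb ?x, bot_emb x) \<in> R" unfolding R_def by force
    then show ?thesis unfolding \<phi>2_def rep_eq by blast
  qed
  have m1: "map \<phi>1 (map g1 (plist k l)) = map (rep \<circ> top_emb) (plist k l)"
    using f1 set_plist by auto
  have m2: "map \<phi>2 (map g2 (plist l m)) = map (rep \<circ> bot_emb) (plist l m)"
    using f2 set_plist by auto
  have h1: "reduce (map (rep \<circ> top_emb) (plist k l)) \<in> H" using Hmap[OF sg S0i w1, of \<phi>1] by (simp only: m1)
  have h2: "reduce (map (rep \<circ> bot_emb) (plist l m)) \<in> H" using Hmap[OF sg S0i w2, of \<phi>2] by (simp only: m2)
  let ?U = "map (\<lambda>i. rep (0, i)) [0..<k]" and ?M = "map (\<lambda>j. rep (1, j)) (rev [0..<l])"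
    and ?L = "map (\<lambda>h. rep (2, h)) (rev [0..<m])"
  have "map (rep \<circ> top_emb) (plist k l) = ?U @ ?M" by (simp add: plist_def)
  moreover have "map (rep \<circ> bot_emb) (plist l m) = rev ?M @ ?L" by (simp add: plist_def rev_map)
  moreover have "map g (plist k m) = ?U @ ?L" by (simp add: plist_def g_def)
  ultimately have "reduce (map g (plist k m)) \<in> H" using Hcomp[OF sg S0i] h1 h2 by metis
  then have "(k, m, Q) \<in> C_H H" unfolding CH_iff using PQ good by blast
  then show ?thesis using pc by simp
qed

end



lemma pts_plist: "pts k l = set (plist k l)" by (simp add: set_plist)

lemma plist02: "plist 0 2 = [Lo 1, Lo 0]" by (simp add: plist_def eval_nat_numeral)
lemma plist11: "plist (Suc 0) (Suc 0) = [Up 0, Lo 0]" by (simp add: plist_def)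
lemma plist04: "plist 0 4 = [Lo 3, Lo 2, Lo 1, Lo 0]" by (simp add: plist_def eval_nat_numeral)
lemma plist33: "plist 3 3 = [Up 0, Up 1, Up 2, Lo 2, Lo 1, Lo 0]" by (simp add: plist_def eval_nat_numeral)

context
  fixes H
  assumes sg: "subgroup H Z2inf" and S0i: "S0_invariant H"
begin

lemma one_block_CH:
  assumes "pts k l \<noteq> {}" and "reduce (replicate (length (plist k l)) (0::nat)) \<in> H"
  shows "(k, l, {pts k l}) \<in> C_H H"
  unfolding CH_iff
proof (intro conjI exI)
  show "partition_on (pts k l) {pts k l}" by (rule partition_on_space[OF assms(1)])
  show "good {pts k l} (pts k l) (\<lambda>_. 0)" by (auto simp: good_def)
  show "reduce (map (\<lambda>_. 0) (plist k l)) \<in> H" using assms(2) by (simp add: map_replicate_const)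
qed

lemma pair_CH: "pair_part \<in> C_H H"
proof -
  have "pts 0 2 = {Lo 0, Lo 1}" by (auto simp: pts_plist plist02)
  moreover have "(0, 2, {pts 0 2}) \<in> C_H H"
    by (rule one_block_CH) (auto simp: pts_plist plist02 reduce_def Hnil[OF sg S0i])
  ultimately show ?thesis by (simp add: pair_part_def)
qed

lemma id_CH: "id_part \<in> C_H H"
proof -
  have "pts 1 1 = {Up 0, Lo 0}" by (auto simp: pts_plist plist11)
  moreover have "(1, 1, {pts 1 1}) \<in> C_H H"
    by (rule one_block_CH) (auto simp: pts_plist plist11 reduce_def Hnil[OF sg S0i])
  ultimately show ?thesis by (simp add: id_part_def)
qed

lemma four_CH: "four_block \<in> C_H H"
proof -
  have "pts 0 4 = {Lo 0, Lo 1, Lo 2, Lo 3}" by (auto simp: pts_plist plist04)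
  moreover have "(0, 4, {pts 0 4}) \<in> C_H H"
    by (rule one_block_CH) (auto simp: pts_plist plist04 reduce_def Hnil[OF sg S0i])
  ultimately show ?thesis by (simp add: four_block_def)
qed

lemma rho_CH: "pair_positioner \<in> C_H H"
proof -
  have pts: "pts 3 3 = {Up 0, Up 1, Up 2, Lo 0, Lo 1, Lo 2}" by (auto simp: pts_plist plist33)
  define B where "B = {{Up 0, Up 1, Lo 1, Lo 2}, {Up 2, Lo 0}}"
  define g where "g x = (if x \<in> {Up 2, Lo 0} then 1 else (0::nat))" for x
  have "partition_on (pts 3 3) B"
    unfolding pts B_def by (rule partition_onI) (auto simp: disjnt_def)
  moreover have "good B (pts 3 3) g"
    unfolding pts B_def good_def g_def by auto
  moreover have "reduce (map g (plist 3 3)) \<in> H"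
    by (simp add: plist33 g_def reduce_def Hnil[OF sg S0i])
  ultimately have "(3, 3, B) \<in> C_H H" unfolding CH_iff by blast
  then show ?thesis by (simp add: pair_positioner_def B_def)
qed

lemma even_in_H:
  assumes ab: "reduce [a, b] \<in> H" and ne: "a \<noteq> b"
  shows "even (length w) \<Longrightarrow> reduce w \<in> H"
proof (induction w rule: induct_list012)
  case 1 then show ?case by (simp add: Hnil[OF sg S0i])
next
  case (2 x) then show ?case by simp
next
  case (3 x y zs)
  have xy: "reduce [x, y] \<in> H"
  proof -
    have "reduce (map (\<lambda>z. if z = a then x else y) [a, b]) \<in> H" by (rule Hmap[OF sg S0i ab])
    then show ?thesis using ne by simp
  qed
  have "reduce zs \<in> H" using 3 by simp
  then show ?case using Hmult[OF sg S0i xy] by simp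
qed

end

theorem mainTheorem7:
  assumes "subgroup H Z2inf" and "H \<subseteq> Even_sub" and "H \<noteq> Even_sub"
    and "S0_invariant H"
  shows "simplifiable_hyperoctahedral (C_H H)"
proof -
  note sg = assms(1) and S0i = assms(4)
  have cat: "category_of_partitions (C_H H)"
    unfolding category_of_partitions_def
    using pair_CH[OF sg S0i] id_CH[OF sg S0i] CH_tensor[OF sg S0i] CH_pcomp[OF sg S0i]
      CH_involution[OF sg S0i] CH_rotUL[OF sg S0i] CH_rotUR[OF sg S0i]
      CH_rotLU[OF sg S0i] CH_rotLR[OF sg S0i]
    by (auto simp: C_H_def)
  have nds: "double_singleton \<notin> C_H H"
  proof
    assume "double_singleton \<in> C_H H"
    then obtain g where g: "good {{Lo 0}, {Lo 1}} (pts 0 2) g"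
      and w: "reduce (map g (plist 0 2)) \<in> H"
      unfolding double_singleton_def CH_iff by blast
    have ne: "g (Lo 1) \<noteq> g (Lo 0)" using g unfolding good_def by (auto simp: pts_def)
    have "reduce [g (Lo 1), g (Lo 0)] \<in> H" using w by (simp add: plist02)
    then have "Even_sub \<subseteq> H"
      using even_in_H[OF sg S0i _ ne] reduce_reduced
      by (auto simp: Even_sub_def Z2inf_def) (metis reduce_reduced)
    then show False using assms(2,3) by blast
  qed
  show ?thesis
    unfolding simplifiable_hyperoctahedral_def hyperoctahedral_def
    using cat nds four_CH[OF sg S0i] rho_CH[OF sg S0i] by blast
qed


end
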